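(* For every $n\geq 2$, $B_d^t(F_n)=1$.
   Context: A total dominator coloring (TD-coloring) of a graph $G$ with no isolated vertex is a proper vertex coloring of $G$ in which every vertex is adjacent to every vertex of some color class. The total dominator chromatic number $\chi_d^t(G)$ is the minimum number of colors in a TD-coloring of $G$. The TDC-bondage number $B_d^t(G)$ is the minimum number of edges of $G$ whose removal changes the total dominator chromatic number of $G$. The friendship graph $F_n$ ($n\ge2$) is obtained by joining $n$ copies of the cycle $C_3$ at a common vertex. *)

theory Defs
  imports Main
begin

definition simple_graph :: "'a set \<Rightarrow> 'a set set \<Rightarrow> bool" where
  "simple_graph V E \<longleftrightarrow> finite V \<and> (\<forall>e\<in>E. e \<subseteq> V \<and> card e = 2)"

definition adj :: "'a set set \<Rightarrow> 'a \<Rightarrow> 'a \<Rightarrow> bool" where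
  "adj E u v \<longleftrightarrow> {u, v} \<in> E"

definition no_isolated :: "'a set \<Rightarrow> 'a set set \<Rightarrow> bool" where
  "no_isolated V E \<longleftrightarrow> (\<forall>v\<in>V. \<exists>u\<in>V. adj E v u)"

definition color_class :: "'a set \<Rightarrow> ('a \<Rightarrow> nat) \<Rightarrow> nat \<Rightarrow> 'a set" where
  "color_class V c i = {u\<in>V. c u = i}"

definition td_coloring :: "'a set \<Rightarrow> 'a set set \<Rightarrow> ('a \<Rightarrow> nat) \<Rightarrow> bool" where
  "td_coloring V E c \<longleftrightarrow>
     (\<forall>u\<in>V. \<forall>v\<in>V. adj E u v \<longrightarrow> c u \<noteq> c v) \<and>
     (\<forall>v\<in>V. \<exists>i\<in>c ` V. \<forall>u\<in>color_class V c i. adj E v u)"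

definition td_chromatic :: "'a set \<Rightarrow> 'a set set \<Rightarrow> nat" where
  "td_chromatic V E = (LEAST k. \<exists>c. td_coloring V E c \<and> card (c ` V) = k)"

text \<open>TDC-bondage number: least number of edges whose removal (leaving a graph
without isolated vertices, so that the parameter is defined) changes the total
dominator chromatic number.\<close>
definition tdc_bondage :: "'a set \<Rightarrow> 'a set set \<Rightarrow> nat" where
  "tdc_bondage V E = (LEAST k. \<exists>F\<subseteq>E. card F = k \<and> no_isolated V (E - F) \<and>
       td_chromatic V (E - F) \<noteq> td_chromatic V E)"

text \<open>Friendship graph F_n: centre 0, triangles {0, 2i-1, 2i} for i = 1..n.\<close>
definition friendship_V :: "nat \<Rightarrow> nat set" where
  "friendship_V n = {0..2*n}"

definition friendship_E :: "nat \<Rightarrow> nat set set" where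
  "friendship_E n = {{0, j} | j. j \<in> {1..2*n}} \<union> {{2*i - 1, 2*i} | i. i \<in> {1..n}}"

end

theory Submission
  imports Defs
begin

lemma finE: "finite (friendship_E n)"
  unfolding friendship_E_def by (auto simp: setcompr_eq_image)

lemma chi_le3:
  assumes n1: "n \<ge> 1"
  shows "td_chromatic (friendship_V n) (friendship_E n) \<le> 3"
proof -
  define c where "c = (\<lambda>v::nat. if v = 0 then 0 else if odd v then 1 else (2::nat))"
  have prp: "\<forall>u\<in>friendship_V n. \<forall>v\<in>friendship_V n. adj (friendship_E n) u v \<longrightarrow> c u \<noteq> c v"
  proof (intro ballI impI)
    fix u v assume "u \<in> friendship_V n" "v \<in> friendship_V n" "adj (friendship_E n) u v"
    then have "{u,v} \<in> friendship_E n" by (simp add: adj_def)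
    then obtain j i where "({u,v} = {0,j} \<and> j \<ge> 1) \<or> ({u,v} = {2*i-1, 2*i} \<and> i \<ge> 1)"
      unfolding friendship_E_def by auto
    then show "c u \<noteq> c v"
    proof
      assume h: "{u,v} = {0,j} \<and> j \<ge> 1"
      then have "(u = 0 \<and> v = j) \<or> (u = j \<and> v = 0)" by (auto simp: doubleton_eq_iff)
      then show ?thesis using h unfolding c_def by auto
    next
      assume h: "{u,v} = {2*i-1, 2*i} \<and> i \<ge> 1"
      then have "(u = 2*i-1 \<and> v = 2*i) \<or> (u = 2*i \<and> v = 2*i-1)" by (auto simp: doubleton_eq_iff)
      moreover have "odd (2*i-1)" using h by (cases i) auto
      ultimately show ?thesis using h unfolding c_def by auto
    qed
  qed
  have dom: "\<forall>v\<in>friendship_V n. \<exists>i\<in>c ` friendship_V n. \<forall>u\<in>color_class (friendship_V n) c i. adj (friendship_E n) v u"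
  proof
    fix v assume v: "v \<in> friendship_V n"
    show "\<exists>i\<in>c ` friendship_V n. \<forall>u\<in>color_class (friendship_V n) c i. adj (friendship_E n) v u"
    proof (cases "v = 0")
      case True
      have "1 \<in> friendship_V n" using n1 by (simp add: friendship_V_def)
      moreover have "\<forall>u\<in>color_class (friendship_V n) c 1. adj (friendship_E n) v u"
      proof
        fix u assume "u \<in> color_class (friendship_V n) c 1"
        then have "u \<noteq> 0" "u \<in> friendship_V n" by (auto simp: color_class_def c_def split: if_splits)
        then have "{0, u} \<in> friendship_E n"
          unfolding friendship_E_def friendship_V_def by auto
        then show "adj (friendship_E n) v u" using True by (simp add: adj_def)
      qed
      moreover have "c 1 = 1" by (simp add: c_def)
      ultimately show ?thesis by (metis image_eqI)
    next
      case False
      have "0 \<in> friendship_V n" by (simp add: friendship_V_def)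
      moreover have "\<forall>u\<in>color_class (friendship_V n) c 0. adj (friendship_E n) v u"
      proof
        fix u assume "u \<in> color_class (friendship_V n) c 0"
        then have "u = 0" by (auto simp: color_class_def c_def split: if_splits)
        moreover have "{0, v} \<in> friendship_E n" using v False
          unfolding friendship_E_def friendship_V_def by auto
        ultimately show "adj (friendship_E n) v u" by (simp add: adj_def insert_commute)
      qed
      ultimately show ?thesis by (metis c_def image_eqI)
    qed
  qed
  have "td_coloring (friendship_V n) (friendship_E n) c"
    using prp dom by (simp add: td_coloring_def)
  moreover have "card (c ` friendship_V n) \<le> 3"
  proof -
    have "c ` friendship_V n \<subseteq> {0,1,2}" by (auto simp: c_def)
    then have "card (c ` friendship_V n) \<le> card {0::nat,1,2}" by (intro card_mono) auto
    also have "\<dots> = 3" by simp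
    finally show ?thesis .
  qed
  ultimately have "(LEAST k. \<exists>c. td_coloring (friendship_V n) (friendship_E n) c \<and> card (c ` friendship_V n) = k) \<le> card (c ` friendship_V n)"
    by (intro Least_le) blast
  with \<open>card (c ` friendship_V n) \<le> 3\<close> show ?thesis unfolding td_chromatic_def by linarith
qed

lemma edge_cases:
  assumes "{u,v} \<in> friendship_E n"
  shows "(u = 0 \<and> v \<in> {1..2*n}) \<or> (v = 0 \<and> u \<in> {1..2*n})
     \<or> (\<exists>i\<in>{1..n}. (u = 2*i-1 \<and> v = 2*i) \<or> (u = 2*i \<and> v = 2*i-1))"
proof -
  from assms obtain j i where "({u,v} = {0,j} \<and> j \<in> {1..2*n}) \<or> ({u,v} = {2*i-1, 2*i} \<and> i \<in> {1..n})"
    unfolding friendship_E_def by auto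
  then show ?thesis
  proof
    assume h: "{u,v} = {0,j} \<and> j \<in> {1..2*n}"
    then have "(u = 0 \<and> v = j) \<or> (u = j \<and> v = 0)" by (auto simp: doubleton_eq_iff)
    then show ?thesis using h by auto
  next
    assume h: "{u,v} = {2*i-1, 2*i} \<and> i \<in> {1..n}"
    then have "(u = 2*i-1 \<and> v = 2*i) \<or> (u = 2*i \<and> v = 2*i-1)" by (auto simp: doubleton_eq_iff)
    then show ?thesis using h by blast
  qed
qed

lemma edge0: "j \<in> {1..2*n} \<Longrightarrow> {0,j} \<in> friendship_E n"
  unfolding friendship_E_def by auto

lemma edge_pair: "i \<in> {1..n} \<Longrightarrow> {2*i-1,2*i} \<in> friendship_E n"
  unfolding friendship_E_def by auto

lemma ge4:
  assumes n2: "n \<ge> 2"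
    and td: "td_coloring (friendship_V n) (friendship_E n - {{0,1}}) c"
  shows "card (c ` friendship_V n) \<ge> 4"
proof -
  let ?V = "friendship_V n" and ?E = "friendship_E n - {{0,1}}"
  have V: "0 \<in> ?V" "1 \<in> ?V" "2 \<in> ?V" "3 \<in> ?V" "4 \<in> ?V"
    using n2 by (auto simp: friendship_V_def)
  have pr: "\<And>u v. u \<in> ?V \<Longrightarrow> v \<in> ?V \<Longrightarrow> adj ?E u v \<Longrightarrow> c u \<noteq> c v"
    using td by (auto simp: td_coloring_def)
  have "{0,2::nat} \<in> friendship_E n" using n2 by (intro edge0) simp
  then have e02: "adj ?E 0 2" by (simp add: adj_def doubleton_eq_iff)
  have "{0,3::nat} \<in> friendship_E n" using n2 by (intro edge0) simp
  then have e03: "adj ?E 0 3" by (simp add: adj_def doubleton_eq_iff)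
  have "{0,4::nat} \<in> friendship_E n" using n2 by (intro edge0) simp
  then have e04: "adj ?E 0 4" by (simp add: adj_def doubleton_eq_iff)
  have "{3,4::nat} \<in> friendship_E n" using edge_pair[of 2 n] n2 by simp
  then have e34: "adj ?E 3 4" unfolding adj_def by (simp add: doubleton_eq_iff)
  from td obtain i where i: "i \<in> c ` ?V" and dom1: "\<forall>u\<in>color_class ?V c i. adj ?E 1 u"
    using V(2) unfolding td_coloring_def by blast
  from i obtain w where w: "w \<in> ?V" "c w = i" by auto
  have "adj ?E 1 w" using dom1 w by (auto simp: color_class_def)
  then have "{1,w} \<in> friendship_E n" "{1,w} \<noteq> {0,1}" by (auto simp: adj_def)
  have w2: "w = 2"
  proof -
    have "w \<noteq> 0" using \<open>{1,w} \<noteq> {0,1}\<close> by auto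
    moreover have "\<not> (\<exists>i::nat. 1 = 2*i)" by presburger
    moreover have "\<And>i::nat. 1 = 2*i-1 \<Longrightarrow> 2*i = 2" by presburger
    ultimately show ?thesis using edge_cases[OF \<open>{1,w} \<in> friendship_E n\<close>] by auto
  qed
  have n13: "\<not> adj ?E 1 3"
  proof
    assume "adj ?E 1 3"
    then have "{1,3::nat} \<in> friendship_E n" by (auto simp: adj_def)
    from edge_cases[OF this] show False by (clarsimp; presburger)
  qed
  have n14: "\<not> adj ?E 1 4"
  proof
    assume "adj ?E 1 4"
    then have "{1,4::nat} \<in> friendship_E n" by (auto simp: adj_def)
    from edge_cases[OF this] show False by (clarsimp; presburger)
  qed
  have "c 3 \<noteq> c 2" using dom1 w w2 n13 V by (auto simp: color_class_def)
  moreover have "c 4 \<noteq> c 2" using dom1 w w2 n14 V by (auto simp: color_class_def)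
  moreover have "c 0 \<noteq> c 2" "c 0 \<noteq> c 3" "c 0 \<noteq> c 4" "c 3 \<noteq> c 4"
    using pr V e02 e03 e04 e34 by auto
  ultimately have "card {c 0, c 2, c 3, c 4} = 4" by auto
  moreover have "{c 0, c 2, c 3, c 4} \<subseteq> c ` ?V" using V by auto
  moreover have "finite (c ` ?V)" by (simp add: friendship_V_def)
  ultimately show ?thesis by (metis card_mono)
qed

lemma noiso:
  assumes n2: "n \<ge> 2"
  shows "no_isolated (friendship_V n) (friendship_E n - {{0,1}})"
  unfolding no_isolated_def
proof
  fix v assume v: "v \<in> friendship_V n"
  let ?E = "friendship_E n - {{0,1}}"
  have V02: "0 \<in> friendship_V n" "2 \<in> friendship_V n" using n2 by (auto simp: friendship_V_def)
  show "\<exists>u\<in>friendship_V n. adj ?E v u"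
  proof (cases "v = 0")
    case True
    have "{0,2::nat} \<in> friendship_E n" using n2 by (intro edge0) simp
    then have "{0,2} \<in> ?E" by (simp add: doubleton_eq_iff)
    then have "adj ?E v 2" using True by (simp add: adj_def)
    then show ?thesis using V02 by blast
  next
    case False
    show ?thesis
    proof (cases "v = 1")
      case True
      have "{1,2::nat} \<in> friendship_E n" using edge_pair[of 1 n] n2 by simp
      then have "{1,2} \<in> ?E" by (simp add: doubleton_eq_iff)
      then have "adj ?E v 2" using True by (simp add: adj_def)
      then show ?thesis using V02 by blast
    next
      case False
      have "{0,v} \<in> friendship_E n" using v \<open>v \<noteq> 0\<close> by (intro edge0) (simp add: friendship_V_def)
      then have "{0,v} \<in> ?E" using False by (simp add: doubleton_eq_iff)
      then have "adj ?E v 0" by (simp add: adj_def insert_commute)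
      then show ?thesis using V02 by blast
    qed
  qed
qed

lemma id_td:
  assumes n2: "n \<ge> 2"
  shows "td_coloring (friendship_V n) (friendship_E n - {{0,1}}) id"
proof -
  let ?V = "friendship_V n" and ?E = "friendship_E n - {{0,1}}"
  have "\<forall>u\<in>?V. \<forall>v\<in>?V. adj ?E u v \<longrightarrow> id u \<noteq> id v"
  proof (intro ballI impI)
    fix u v assume "adj ?E u v"
    then have "{u,v} \<in> friendship_E n" by (auto simp: adj_def)
    from edge_cases[OF this] show "id u \<noteq> id v" by auto
  qed
  moreover have "\<forall>v\<in>?V. \<exists>i\<in>id ` ?V. \<forall>u\<in>color_class ?V id i. adj ?E v u"
  proof
    fix v assume "v \<in> ?V"
    then obtain w where "w \<in> ?V" "adj ?E v w" using noiso[OF n2] by (auto simp: no_isolated_def)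
    then show "\<exists>i\<in>id ` ?V. \<forall>u\<in>color_class ?V id i. adj ?E v u"
      by (auto simp: color_class_def intro!: bexI[of _ w])
  qed
  ultimately show ?thesis by (simp add: td_coloring_def)
qed

lemma chi_ge4:
  assumes n2: "n \<ge> 2"
  shows "td_chromatic (friendship_V n) (friendship_E n - {{0,1}}) \<ge> 4"
proof -
  let ?P = "\<lambda>k. \<exists>c. td_coloring (friendship_V n) (friendship_E n - {{0,1}}) c \<and> card (c ` friendship_V n) = k"
  have "?P (LEAST k. ?P k)" by (rule LeastI_ex) (use id_td[OF n2] in blast)
  then show ?thesis unfolding td_chromatic_def using ge4[OF n2] by metis
qed

theorem mainTheorem14:
  fixes n :: nat
  assumes "n \<ge> 2"
  shows "tdc_bondage (friendship_V n) (friendship_E n) = 1"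
  unfolding tdc_bondage_def
proof (rule Least_equality)
  show "\<exists>F\<subseteq>friendship_E n. card F = 1 \<and> no_isolated (friendship_V n) (friendship_E n - F) \<and>
       td_chromatic (friendship_V n) (friendship_E n - F) \<noteq> td_chromatic (friendship_V n) (friendship_E n)"
  proof (intro exI[of _ "{{0,1}}"] conjI)
    show "{{0,1}} \<subseteq> friendship_E n" using edge0[of 1 n] assms by simp
    show "card {{0::nat,1}} = 1" by simp
    show "no_isolated (friendship_V n) (friendship_E n - {{0,1}})" using noiso[OF assms] .
    show "td_chromatic (friendship_V n) (friendship_E n - {{0,1}}) \<noteq> td_chromatic (friendship_V n) (friendship_E n)"
      using chi_ge4[OF assms] chi_le3[of n] assms by auto
  qed
next
  fix k assume "\<exists>F\<subseteq>friendship_E n. card F = k \<and> no_isolated (friendship_V n) (friendship_E n - F) \<and>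
       td_chromatic (friendship_V n) (friendship_E n - F) \<noteq> td_chromatic (friendship_V n) (friendship_E n)"
  then obtain F where F: "F \<subseteq> friendship_E n" "card F = k"
    "td_chromatic (friendship_V n) (friendship_E n - F) \<noteq> td_chromatic (friendship_V n) (friendship_E n)" by blast
  have "finite F" using F(1) finE finite_subset by blast
  show "1 \<le> k"
  proof (rule ccontr)
    assume "\<not> 1 \<le> k"
    then have "card F = 0" using F(2) by simp
    then have "F = {}" using \<open>finite F\<close> by simp
    then show False using F(3) by simp
  qed
qed

end
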